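(* Let $B$ be a compact manifold with nonempty boundary $\partial B$, $c:\partial B\times[0,1)\hookrightarrow B$ an open collar of $\partial B$, and $\mathcal U=\{U_\alpha\}_{\alpha\in I}$ a finite open cover of $B$. Then there is $\epsilon\in(0,1]$ such that the subcollar $c|:\partial B\times[0,\epsilon)\hookrightarrow B$ is small with respect to $\mathcal U$.
   Context: A collar $c:\partial B\times[0,\epsilon)\hookrightarrow B$ is small with respect to $\mathcal U$ if (1) $U_\alpha\cap\big(B\setminus c(\partial B\times[0,\epsilon))\big)\ne\emptyset$ for every $\alpha\in I$, and (2) letting $I_\partial\subset I$ be the set of $\alpha$ with $U_\alpha\cap\partial B\neq\emptyset$, there exist open sets $W_\alpha\subset\partial B$, $\alpha\in I_\partial$, with $c(W_\alpha\times[0,\epsilon))\subset U_\alpha$ and $\{W_\alpha\}_{\alpha\in I_\partial}$ an open cover of $\partial B$. *)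

theory Defs
  imports "HOL-Analysis.Analysis"
begin

definition half_space :: "'m::euclidean_space itself \<Rightarrow> 'm set" where
  "half_space _ = {x. 0 \<le> x \<bullet> (SOME b. b \<in> (Basis::'m set))}"

definition bchart :: "'m::euclidean_space itself \<Rightarrow> 'a topology \<Rightarrow> 'a \<Rightarrow> 'a set \<Rightarrow> 'm set \<Rightarrow> ('a \<Rightarrow> 'm) \<Rightarrow> bool" where
  "bchart T X p U V \<phi> \<longleftrightarrow> openin X U \<and> p \<in> U \<and>
     openin (subtopology euclidean (half_space T)) V \<and>
     homeomorphic_map (subtopology X U) (subtopology euclidean V) \<phi>"

definition manifold_with_boundary :: "'m::euclidean_space itself \<Rightarrow> 'a topology \<Rightarrow> bool" where
  "manifold_with_boundary T X \<longleftrightarrow> Hausdorff_space X \<and> second_countable X \<and>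
     (\<forall>p\<in>topspace X. \<exists>U V (\<phi>::'a \<Rightarrow> 'm). bchart T X p U V \<phi>)"

definition mboundary :: "'m::euclidean_space itself \<Rightarrow> 'a topology \<Rightarrow> 'a set" where
  "mboundary T X = {p \<in> topspace X. \<exists>U V (\<phi>::'a \<Rightarrow> 'm). bchart T X p U V \<phi> \<and>
       \<phi> p \<bullet> (SOME b. b \<in> (Basis::'m set)) = 0}"

definition open_collar :: "'a topology \<Rightarrow> 'a set \<Rightarrow> ('a \<times> real \<Rightarrow> 'a) \<Rightarrow> bool" where
  "open_collar X D c \<longleftrightarrow>
     openin X (c ` (D \<times> {0..<1})) \<and>
     homeomorphic_map (prod_topology (subtopology X D) (subtopology euclideanreal {0..<1}))
        (subtopology X (c ` (D \<times> {0..<1}))) c \<and>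
     (\<forall>x\<in>D. c (x, 0) = x)"

definition small_collar :: "'a topology \<Rightarrow> 'a set \<Rightarrow> ('a \<times> real \<Rightarrow> 'a) \<Rightarrow> real \<Rightarrow> 'i set \<Rightarrow> ('i \<Rightarrow> 'a set) \<Rightarrow> bool" where
  "small_collar X D c \<epsilon> I U \<longleftrightarrow>
     (\<forall>a\<in>I. U a \<inter> (topspace X - c ` (D \<times> {0..<\<epsilon>})) \<noteq> {}) \<and>
     (\<exists>W. (\<forall>a\<in>{a\<in>I. U a \<inter> D \<noteq> {}}. openin (subtopology X D) (W a) \<and>
                 c ` (W a \<times> {0..<\<epsilon>}) \<subseteq> U a) \<and>
          (\<Union>a\<in>{a\<in>I. U a \<inter> D \<noteq> {}}. W a) = D)"

end

theory Submission
  imports Defs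
begin

lemma bdry_key:
  fixes \<phi> \<psi> :: "'a \<Rightarrow> 'm::euclidean_space"
  assumes ch1: "bchart TYPE('m) X p U V \<phi>" and ch2: "bchart TYPE('m) X p U2 V2 \<psi>"
    and pos: "\<phi> p \<bullet> b > 0" and zer: "\<psi> p \<bullet> b = 0" and bdef: "b = (SOME b. b \<in> (Basis::'m set))"
  shows False
proof -
  have bB: "b \<in> Basis" unfolding bdef by (rule someI_ex) (use nonempty_Basis in blast)
  have hs: "half_space TYPE('m) = {x. 0 \<le> x \<bullet> b}" unfolding half_space_def bdef by simp
  from ch1 have oU: "openin X U" and pU: "p \<in> U"
    and oV: "openin (top_of_set (half_space TYPE('m))) V"
    and h1: "homeomorphic_map (subtopology X U) (top_of_set V) \<phi>" unfolding bchart_def by auto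
  from ch2 have oU2: "openin X U2" and pU2: "p \<in> U2"
    and oV2: "openin (top_of_set (half_space TYPE('m))) V2"
    and h2: "homeomorphic_map (subtopology X U2) (top_of_set V2) \<psi>" unfolding bchart_def by auto
  obtain g where hm: "homeomorphic_maps (subtopology X U) (top_of_set V) \<phi> g"
    using h1 homeomorphic_map_maps by blast
  have UX: "U \<subseteq> topspace X" using oU openin_subset by blast
  have U2X: "U2 \<subseteq> topspace X" using oU2 openin_subset by blast
  define W where "W = {x \<in> U \<inter> U2. \<phi> x \<bullet> b > 0}"
  have c1: "continuous_map (subtopology X U) euclidean \<phi>"
    using homeomorphic_imp_continuous_map[OF h1] continuous_map_into_fulltopology by blast
  have c2: "continuous_map (subtopology X U2) euclidean \<psi>"
    using homeomorphic_imp_continuous_map[OF h2] continuous_map_into_fulltopology by blast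
  have "openin (subtopology X U) {x \<in> topspace (subtopology X U). \<phi> x \<in> {y. b \<bullet> y > 0}}"
    by (rule openin_continuous_map_preimage[OF c1]) (simp add: open_halfspace_gt)
  hence "openin X {x \<in> topspace (subtopology X U). \<phi> x \<in> {y. b \<bullet> y > 0}}"
    using oU openin_trans_full by blast
  hence "openin X (U2 \<inter> {x \<in> topspace (subtopology X U). \<phi> x \<in> {y. b \<bullet> y > 0}})"
    using oU2 by blast
  moreover have "U2 \<inter> {x \<in> topspace (subtopology X U). \<phi> x \<in> {y. b \<bullet> y > 0}} = W"
    using UX by (auto simp: W_def inner_commute)
  ultimately have oW: "openin X W" by simp
  have WU: "W \<subseteq> U" "W \<subseteq> U2" "W \<subseteq> topspace X" using UX by (auto simp: W_def)
  have pW: "p \<in> W" using pU pU2 pos by (simp add: W_def)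
  have "openin (subtopology X U) W"
    unfolding openin_subtopology using oW WU by blast
  hence "openin (top_of_set V) (\<phi> ` W)"
    using homeomorphic_map_openness[OF h1, of W] WU by simp
  then obtain G1 where G1: "open G1" "\<phi> ` W = V \<inter> G1" by (auto simp: openin_open)
  obtain G0 where G0: "open G0" "V = half_space TYPE('m) \<inter> G0" using oV by (auto simp: openin_open)
  have pos': "\<phi> ` W \<subseteq> {y. b \<bullet> y > 0}" by (auto simp: W_def inner_commute)
  have "{y. b \<bullet> y > 0} \<subseteq> half_space TYPE('m)" by (auto simp: hs inner_commute)
  hence "\<phi> ` W = G0 \<inter> G1 \<inter> {y. b \<bullet> y > 0}"
    using G1 G0 pos' by blast
  hence opW: "open (\<phi> ` W)" using G0 G1 by (simp add: open_Int open_halfspace_gt)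
  have gphi: "\<And>x. x \<in> W \<Longrightarrow> g (\<phi> x) = x"
    using hm WU unfolding homeomorphic_maps_def by auto
  have cg: "continuous_map (top_of_set V) (subtopology X U) g"
    using hm unfolding homeomorphic_maps_def by auto
  have sub: "\<phi> ` W \<subseteq> V" using G1 by auto
  have "continuous_map (subtopology (top_of_set V) (\<phi> ` W)) X g"
    using continuous_map_from_subtopology[OF continuous_map_into_fulltopology[OF cg]] by blast
  hence "continuous_map (top_of_set (\<phi> ` W)) X g"
    using sub by (simp add: subtopology_subtopology inf_absorb2)
  hence "continuous_map (top_of_set (\<phi> ` W)) (subtopology X U2) g"
    using gphi WU by (auto simp: continuous_map_in_subtopology)
  hence "continuous_map (top_of_set (\<phi> ` W)) euclidean (\<psi> \<circ> g)"
    using c2 continuous_map_compose by blast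
  hence cont: "continuous_on (\<phi> ` W) (\<psi> \<circ> g)" by simp
  have injpsi: "inj_on \<psi> U2"
    using homeomorphic_imp_injective_map[OF h2] U2X by (simp add: inf_absorb2)
  have inj: "inj_on (\<psi> \<circ> g) (\<phi> ` W)"
  proof (rule inj_onI)
    fix u v assume "u \<in> \<phi> ` W" "v \<in> \<phi> ` W" "(\<psi> \<circ> g) u = (\<psi> \<circ> g) v"
    then obtain x y where xy: "x \<in> W" "y \<in> W" "u = \<phi> x" "v = \<phi> y" "\<psi> x = \<psi> y"
      using gphi by auto
    hence "x = y" using injpsi WU unfolding inj_on_def by blast
    thus "u = v" using xy by simp
  qed
  have img: "(\<psi> \<circ> g) ` (\<phi> ` W) = \<psi> ` W"
    using gphi by (force simp: image_comp)
  have "open (\<psi> ` W)" using invariance_of_domain[OF cont opW inj] img by simp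
  moreover have "\<psi> p \<in> \<psi> ` W" using pW by simp
  ultimately obtain r where r: "r > 0" "ball (\<psi> p) r \<subseteq> \<psi> ` W"
    using open_contains_ball by blast
  define z where "z = \<psi> p - (r/2) *\<^sub>R b"
  have "dist (\<psi> p) z < r" using r bB by (simp add: z_def dist_norm)
  hence "z \<in> \<psi> ` W" using r by auto
  moreover have "\<psi> ` U2 \<subseteq> V2"
    using homeomorphic_imp_surjective_map[OF h2] U2X by auto
  moreover have "V2 \<subseteq> half_space TYPE('m)" using openin_subset[OF oV2] by simp
  ultimately have "z \<in> half_space TYPE('m)" using WU by blast
  moreover have "z \<bullet> b < 0" using zer r bB by (simp add: z_def inner_diff_left)
  ultimately show False by (simp add: hs)
qed


lemma bdry_closed:
  assumes M: "manifold_with_boundary TYPE('m::euclidean_space) X"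
  shows "closedin X (mboundary TYPE('m) X)"
proof -
  define b where "b = (SOME b. b \<in> (Basis::'m set))"
  have hs: "half_space TYPE('m) = {x. 0 \<le> x \<bullet> b}" unfolding half_space_def b_def by simp
  have "openin X (topspace X - mboundary TYPE('m) X)"
  proof (subst openin_subopen, intro ballI)
    fix q assume q: "q \<in> topspace X - mboundary TYPE('m) X"
    then obtain U V and \<phi> :: "'a \<Rightarrow> 'm" where ch: "bchart TYPE('m) X q U V \<phi>"
      using M unfolding manifold_with_boundary_def by blast
    from ch have oU: "openin X U" and qU: "q \<in> U"
      and oV: "openin (top_of_set (half_space TYPE('m))) V"
      and h1: "homeomorphic_map (subtopology X U) (top_of_set V) \<phi>" unfolding bchart_def by auto
    have UX: "U \<subseteq> topspace X" using oU openin_subset by blast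
    have VH: "V \<subseteq> half_space TYPE('m)" using openin_subset[OF oV] by simp
    have "\<phi> ` U \<subseteq> V"
      using homeomorphic_imp_surjective_map[OF h1] UX by auto
    hence "\<phi> q \<bullet> b \<ge> 0" using qU VH hs by auto
    moreover have "\<phi> q \<bullet> b \<noteq> 0" using q ch unfolding mboundary_def b_def by blast
    ultimately have qpos: "\<phi> q \<bullet> b > 0" by simp
    define U' where "U' = {x \<in> topspace (subtopology X U). \<phi> x \<in> {y. b \<bullet> y > 0}}"
    have c1: "continuous_map (subtopology X U) euclidean \<phi>"
      using homeomorphic_imp_continuous_map[OF h1] continuous_map_into_fulltopology by blast
    have "openin (subtopology X U) U'" unfolding U'_def
      by (rule openin_continuous_map_preimage[OF c1]) (simp add: open_halfspace_gt)
    hence oU': "openin X U'" using oU openin_trans_full by blast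
    have "q \<in> U'" using qU UX qpos by (auto simp: U'_def inner_commute)
    moreover have "U' \<subseteq> topspace X - mboundary TYPE('m) X"
    proof
      fix p assume p: "p \<in> U'"
      hence pU: "p \<in> U" "p \<in> topspace X" and pp: "\<phi> p \<bullet> b > 0" by (auto simp: U'_def inner_commute)
      have ch1: "bchart TYPE('m) X p U V \<phi>" using ch pU unfolding bchart_def by auto
      have "p \<notin> mboundary TYPE('m) X"
      proof
        assume "p \<in> mboundary TYPE('m) X"
        then obtain U2 V2 and \<psi> :: "'a \<Rightarrow> 'm" where "bchart TYPE('m) X p U2 V2 \<psi>" "\<psi> p \<bullet> b = 0"
          unfolding mboundary_def b_def by blast
        thus False using bdry_key[OF ch1 _ pp _ b_def] by blast
      qed
      thus "p \<in> topspace X - mboundary TYPE('m) X" using pU by blast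
    qed
    ultimately show "\<exists>T. openin X T \<and> q \<in> T \<and> T \<subseteq> topspace X - mboundary TYPE('m) X"
      using oU' by blast
  qed
  moreover have "mboundary TYPE('m) X \<subseteq> topspace X" unfolding mboundary_def by blast
  ultimately show ?thesis unfolding closedin_def by blast
qed


theorem mainTheorem10:
  fixes X :: "'a topology" and c :: "'a \<times> real \<Rightarrow> 'a"
    and I :: "'i set" and U :: "'i \<Rightarrow> 'a set"
  assumes "manifold_with_boundary TYPE('m::euclidean_space) X"
    and "compact_space X"
    and "mboundary TYPE('m) X \<noteq> {}"
    and "open_collar X (mboundary TYPE('m) X) c"
    and "finite I"
    and "\<forall>a\<in>I. openin X (U a) \<and> U a \<noteq> {}"
    and "(\<Union>a\<in>I. U a) = topspace X"
  shows "\<exists>\<epsilon>. 0 < \<epsilon> \<and> \<epsilon> \<le> 1 \<and> small_collar X (mboundary TYPE('m) X) c \<epsilon> I U"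
proof -
  define D where "D = mboundary TYPE('m) X"
  have Dcl: "closedin X D" unfolding D_def by (rule bdry_closed[OF assms(1)])
  have DX: "D \<subseteq> topspace X" using closedin_subset[OF Dcl] .
  have Dcomp: "compactin X D" using closedin_compact_space[OF assms(2) Dcl] .
  define P where "P = prod_topology (subtopology X D) (top_of_set {0..<(1::real)})"
  have col: "homeomorphic_map P (subtopology X (c ` (D \<times> {0..<1}))) c"
    and c0: "\<And>x. x \<in> D \<Longrightarrow> c (x, 0) = x"
    using assms(4) unfolding open_collar_def D_def P_def by auto
  have tP: "topspace P = D \<times> {0..<1}" using DX by (auto simp: P_def inf_absorb2)
  have contc: "continuous_map P X c"
    using homeomorphic_imp_continuous_map[OF col] continuous_map_into_fulltopology by blast
  have injc: "inj_on c (D \<times> {0..<1})"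
    using homeomorphic_imp_injective_map[OF col] tP by simp
  have cX: "\<And>x t. x \<in> D \<Longrightarrow> 0 \<le> t \<Longrightarrow> t < 1 \<Longrightarrow> c (x, t) \<in> topspace X"
    using continuous_map_image_subset_topspace[OF contc] tP by auto
  have oUa: "\<And>a. a \<in> I \<Longrightarrow> openin X (U a)" using assms(6) by auto
  have tube: "\<exists>N r. openin (subtopology X D) N \<and> x \<in> N \<and> r > 0 \<and>
      (\<forall>y\<in>N. \<forall>s. 0 \<le> s \<and> s < 1 \<and> \<bar>s - t\<bar> < r \<longrightarrow> c (y, s) \<in> U a)"
    if a: "a \<in> I" and x: "x \<in> D" and t: "0 \<le> t" "t < 1" and cin: "c (x, t) \<in> U a" for a x t
  proof -
    define Opre where "Opre = {z \<in> topspace P. c z \<in> U a}"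
    have oO: "openin P Opre" unfolding Opre_def
      by (rule openin_continuous_map_preimage[OF contc oUa[OF a]])
    have xtO: "(x, t) \<in> Opre" using x t cin tP by (auto simp: Opre_def)
    have "\<forall>x y. (x, y) \<in> Opre \<longrightarrow> (\<exists>U V. openin (subtopology X D) U \<and> openin (top_of_set {0..<1}) V \<and> x \<in> U \<and> y \<in> V \<and> U \<times> V \<subseteq> Opre)"
      using oO unfolding P_def openin_prod_topology_alt .
    then obtain N V where NV: "openin (subtopology X D) N" "openin (top_of_set {0..<1}) V"
      "x \<in> N" "t \<in> V" "N \<times> V \<subseteq> Opre"
      using xtO by meson
    obtain G where G: "open G" "V = {0..<1} \<inter> G" using NV(2) by (auto simp: openin_open)
    obtain r where r: "r > 0" "ball t r \<subseteq> G" using G NV(4) open_contains_ball by blast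
    have "\<forall>y\<in>N. \<forall>s. 0 \<le> s \<and> s < 1 \<and> \<bar>s - t\<bar> < r \<longrightarrow> c (y, s) \<in> U a"
    proof (intro ballI allI impI)
      fix y s assume y: "y \<in> N" and s: "0 \<le> s \<and> s < 1 \<and> \<bar>s - t\<bar> < r"
      hence "s \<in> ball t r" by (simp add: dist_real_def abs_minus_commute)
      hence "s \<in> V" using r G s by auto
      thus "c (y, s) \<in> U a" using NV(5) y unfolding Opre_def by blast
    qed
    thus ?thesis using NV r by blast
  qed
  define \<G> where "\<G> = {G. openin X G \<and> (\<exists>r>0. \<exists>a\<in>I. \<forall>y\<in>D \<inter> G. \<forall>s. 0 \<le> s \<and> s < r \<and> s < 1 \<longrightarrow> c (y, s) \<in> U a)}"
  have "D \<subseteq> \<Union>\<G>"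
  proof
    fix x assume x: "x \<in> D"
    then obtain a where a: "a \<in> I" "x \<in> U a" using assms(7) DX by blast
    hence "c (x, 0) \<in> U a" using c0 x by simp
    then obtain N r where Nr: "openin (subtopology X D) N" "x \<in> N" "r > 0"
      "\<forall>y\<in>N. \<forall>s. 0 \<le> s \<and> s < 1 \<and> \<bar>s - 0\<bar> < r \<longrightarrow> c (y, s) \<in> U a"
      using tube[OF a(1) x order_refl zero_less_one] by blast
    obtain G where G: "openin X G" "N = G \<inter> D" using Nr(1) by (auto simp: openin_subtopology)
    have "G \<in> \<G>" unfolding \<G>_def using G Nr a by (auto intro!: exI[of _ r] bexI[of _ a])
    thus "x \<in> \<Union>\<G>" using G Nr by blast
  qed
  moreover have "\<forall>G\<in>\<G>. openin X G" unfolding \<G>_def by blast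
  ultimately obtain F where F: "finite F" "F \<subseteq> \<G>" "D \<subseteq> \<Union>F"
    using Dcomp unfolding compactin_def by meson
  have "\<forall>G\<in>F. \<exists>r>0. \<exists>a\<in>I. \<forall>y\<in>D \<inter> G. \<forall>s. 0 \<le> s \<and> s < r \<and> s < 1 \<longrightarrow> c (y, s) \<in> U a"
    using F(2) unfolding \<G>_def by blast
  then obtain R A where RA: "\<forall>G\<in>F. R G > 0 \<and> A G \<in> I \<and> (\<forall>y\<in>D \<inter> G. \<forall>s. 0 \<le> s \<and> s < R G \<and> s < 1 \<longrightarrow> c (y, s) \<in> U (A G))"
    by metis
  define e where "e = Min (insert 1 (R ` F))"
  have e: "e > 0" "e \<le> 1" "\<And>G. G \<in> F \<Longrightarrow> e \<le> R G"
    using F(1) RA by (auto simp: e_def)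
  have unif: "\<exists>a\<in>I. \<exists>N. openin (subtopology X D) N \<and> x \<in> N \<and> c ` (N \<times> {0..<e}) \<subseteq> U a"
    if x: "x \<in> D" for x
  proof -
    obtain G where G: "G \<in> F" "x \<in> G" using F(3) x by blast
    have oG: "openin X G" using G F(2) unfolding \<G>_def by blast
    have "openin (subtopology X D) (G \<inter> D)" using oG by (auto simp: openin_subtopology)
    moreover have "c ` ((G \<inter> D) \<times> {0..<e}) \<subseteq> U (A G)"
      using RA G e by fastforce
    ultimately show ?thesis using RA G x by blast
  qed
  have "\<exists>ea>0. ea \<le> 1 \<and> (\<exists>q\<in>U a. q \<in> topspace X \<and> q \<notin> c ` (D \<times> {0..<ea}))" if a: "a \<in> I" for a
  proof -
    obtain p where p: "p \<in> U a" using assms(6) a by blast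
    have pX: "p \<in> topspace X" using p oUa[OF a] openin_subset by blast
    show ?thesis
    proof (cases "p \<in> c ` (D \<times> {0..<1})")
      case False
      thus ?thesis using p pX by (intro exI[of _ 1]) auto
    next
      case True
      then obtain x t where xt: "x \<in> D" "0 \<le> t" "t < 1" "p = c (x, t)" by auto
      obtain N r where Nr: "x \<in> N" "r > 0"
        "\<forall>y\<in>N. \<forall>s. 0 \<le> s \<and> s < 1 \<and> \<bar>s - t\<bar> < r \<longrightarrow> c (y, s) \<in> U a"
        using tube[OF a xt(1) xt(2) xt(3)] xt(4) p by blast
      define s where "s = t + min r (1 - t) / 2"
      have s: "t < s" "s < 1" "\<bar>s - t\<bar> < r" using Nr xt by (auto simp: s_def min_def field_simps)
      have q: "c (x, s) \<in> U a" using Nr s xt by auto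
      have "c (x, s) \<notin> c ` (D \<times> {0..<s})"
      proof
        assume "c (x, s) \<in> c ` (D \<times> {0..<s})"
        then obtain y u where yu: "y \<in> D" "0 \<le> u" "u < s" "c (x, s) = c (y, u)" by auto
        have "(x, s) = (y, u)"
          using injc yu xt s unfolding inj_on_def by (metis atLeastLessThan_iff mem_Sigma_iff order.strict_trans less_le_not_le order_trans)
        thus False using yu by simp
      qed
      moreover have "c (x, s) \<in> topspace X" using cX[OF xt(1)] s xt by simp
      ultimately show ?thesis using q s xt by (intro exI[of _ s]) auto
    qed
  qed
  then obtain EA where EA: "\<And>a. a \<in> I \<Longrightarrow> EA a > 0 \<and> EA a \<le> 1 \<and> (\<exists>q\<in>U a. q \<in> topspace X \<and> q \<notin> c ` (D \<times> {0..<EA a}))"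
    by metis
  define \<epsilon> where "\<epsilon> = Min (insert e (EA ` I))"
  have eps: "\<epsilon> > 0" "\<epsilon> \<le> e" "\<And>a. a \<in> I \<Longrightarrow> \<epsilon> \<le> EA a"
    using assms(5) EA e by (auto simp: \<epsilon>_def)
  have cond1: "\<forall>a\<in>I. U a \<inter> (topspace X - c ` (D \<times> {0..<\<epsilon>})) \<noteq> {}"
  proof
    fix a assume a: "a \<in> I"
    then obtain q where q: "q \<in> U a" "q \<in> topspace X" "q \<notin> c ` (D \<times> {0..<EA a})" using EA by blast
    have "c ` (D \<times> {0..<\<epsilon>}) \<subseteq> c ` (D \<times> {0..<EA a})" using eps(3)[OF a] by auto
    thus "U a \<inter> (topspace X - c ` (D \<times> {0..<\<epsilon>})) \<noteq> {}" using q by blast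
  qed
  define W where "W = (\<lambda>a. \<Union>{N. openin (subtopology X D) N \<and> c ` (N \<times> {0..<\<epsilon>}) \<subseteq> U a})"
  have W1: "\<forall>a\<in>{a\<in>I. U a \<inter> D \<noteq> {}}. openin (subtopology X D) (W a) \<and> c ` (W a \<times> {0..<\<epsilon>}) \<subseteq> U a"
    unfolding W_def by (auto intro!: openin_Union)
  have W2: "(\<Union>a\<in>{a\<in>I. U a \<inter> D \<noteq> {}}. W a) = D"
  proof
    show "(\<Union>a\<in>{a\<in>I. U a \<inter> D \<noteq> {}}. W a) \<subseteq> D"
      unfolding W_def using openin_subset by fastforce
  next
    show "D \<subseteq> (\<Union>a\<in>{a\<in>I. U a \<inter> D \<noteq> {}}. W a)"
    proof
      fix x assume x: "x \<in> D"
      then obtain a N where aN: "a \<in> I" "openin (subtopology X D) N" "x \<in> N" "c ` (N \<times> {0..<e}) \<subseteq> U a"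
        using unif by blast
      have "c ` (N \<times> {0..<\<epsilon>}) \<subseteq> U a" using aN(4) eps(2) by auto
      hence "x \<in> W a" unfolding W_def using aN by blast
      moreover have "x \<in> U a" using aN(3,4) c0[OF x] e(1) by force
      ultimately show "x \<in> (\<Union>a\<in>{a\<in>I. U a \<inter> D \<noteq> {}}. W a)" using aN x by blast
    qed
  qed
  have sc: "small_collar X D c \<epsilon> I U"
    unfolding small_collar_def using cond1 W1 W2 by blast
  have le1: "\<epsilon> \<le> 1" using eps e by simp
  show ?thesis unfolding D_def[symmetric] using sc le1 eps(1) by blast
qed

end
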